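(* Let $G$ be a connected graph of order $n$ with maximum degree $\Delta$, and let $k\ge\chi(G)$ be an integer. Then $\mathrm{sn}(G,k)=n$ if and only if $k>\Delta+1$. Also, $\underline{\mathrm{lcs}}(G,k)=n$ if and only if $k>\Delta+1$.
   Context: All graphs are finite and simple. For a graph $G=(V,E)$ and an integer $k\ge\chi(G)$, a proper $k$-colouring is a map $c:V\to[k]$ with $c(u)\neq c(v)$ for every edge $uv$. A set $S\subseteq V$ is a determining set for $(G,c)$ if there is no proper $k$-colouring $c'\neq c$ of $G$ with $c'(s)=c(s)$ for all $s\in S$. A critical set for $(G,c)$ is an inclusion-minimal determining set. $\mathrm{scs}(G,c)$ and $\mathrm{lcs}(G,c)$ are the sizes of a smallest resp. largest critical set for $(G,c)$. $\mathrm{sn}(G,k)$ is the minimum of $\mathrm{scs}(G,c)$ over all proper $k$-colourings $c$ (equivalently the minimum number of vertices coloured in a partial colouring having a unique extension to a proper $k$-colouring), and $\underline{\mathrm{lcs}}(G,k)$ is the minimum of $\mathrm{lcs}(G,c)$ over all proper $k$-colourings $c$. *)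

theory Defs
  imports Main
begin

definition simple_graph :: "'a set \<Rightarrow> ('a \<Rightarrow> 'a \<Rightarrow> bool) \<Rightarrow> bool" where
  "simple_graph V E \<longleftrightarrow> finite V \<and> (\<forall>u v. E u v \<longrightarrow> u \<in> V \<and> v \<in> V)
     \<and> (\<forall>u v. E u v \<longrightarrow> E v u) \<and> (\<forall>v. \<not> E v v)"

definition connected_graph :: "'a set \<Rightarrow> ('a \<Rightarrow> 'a \<Rightarrow> bool) \<Rightarrow> bool" where
  "connected_graph V E \<longleftrightarrow> V \<noteq> {} \<and> (\<forall>u\<in>V. \<forall>v\<in>V. E\<^sup>*\<^sup>* u v)"

definition degree :: "'a set \<Rightarrow> ('a \<Rightarrow> 'a \<Rightarrow> bool) \<Rightarrow> 'a \<Rightarrow> nat" where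
  "degree V E v = card {u\<in>V. E v u}"

definition max_degree :: "'a set \<Rightarrow> ('a \<Rightarrow> 'a \<Rightarrow> bool) \<Rightarrow> nat" where
  "max_degree V E = Max (degree V E ` V)"

definition proper_colouring :: "'a set \<Rightarrow> ('a \<Rightarrow> 'a \<Rightarrow> bool) \<Rightarrow> nat \<Rightarrow> ('a \<Rightarrow> nat) \<Rightarrow> bool" where
  "proper_colouring V E k c \<longleftrightarrow> (\<forall>v\<in>V. c v \<in> {1..k}) \<and> (\<forall>u v. E u v \<longrightarrow> c u \<noteq> c v)"

definition chromatic_number :: "'a set \<Rightarrow> ('a \<Rightarrow> 'a \<Rightarrow> bool) \<Rightarrow> nat" where
  "chromatic_number V E = (LEAST k. \<exists>c. proper_colouring V E k c)"

text \<open>Two colourings are different iff they differ at some vertex of V.\<close>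
definition determining_set :: "'a set \<Rightarrow> ('a \<Rightarrow> 'a \<Rightarrow> bool) \<Rightarrow> nat \<Rightarrow> ('a \<Rightarrow> nat) \<Rightarrow> 'a set \<Rightarrow> bool" where
  "determining_set V E k c S \<longleftrightarrow> S \<subseteq> V \<and>
     \<not> (\<exists>c'. proper_colouring V E k c' \<and> (\<exists>v\<in>V. c' v \<noteq> c v) \<and> (\<forall>s\<in>S. c' s = c s))"

definition critical_set :: "'a set \<Rightarrow> ('a \<Rightarrow> 'a \<Rightarrow> bool) \<Rightarrow> nat \<Rightarrow> ('a \<Rightarrow> nat) \<Rightarrow> 'a set \<Rightarrow> bool" where
  "critical_set V E k c S \<longleftrightarrow> determining_set V E k c S \<and>
     (\<forall>T. T \<subset> S \<longrightarrow> \<not> determining_set V E k c T)"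

definition scs :: "'a set \<Rightarrow> ('a \<Rightarrow> 'a \<Rightarrow> bool) \<Rightarrow> nat \<Rightarrow> ('a \<Rightarrow> nat) \<Rightarrow> nat" where
  "scs V E k c = Min {card S | S. critical_set V E k c S}"

definition lcs :: "'a set \<Rightarrow> ('a \<Rightarrow> 'a \<Rightarrow> bool) \<Rightarrow> nat \<Rightarrow> ('a \<Rightarrow> nat) \<Rightarrow> nat" where
  "lcs V E k c = Max {card S | S. critical_set V E k c S}"

definition sn :: "'a set \<Rightarrow> ('a \<Rightarrow> 'a \<Rightarrow> bool) \<Rightarrow> nat \<Rightarrow> nat" where
  "sn V E k = Min {scs V E k c | c. proper_colouring V E k c}"

definition lcs_lower :: "'a set \<Rightarrow> ('a \<Rightarrow> 'a \<Rightarrow> bool) \<Rightarrow> nat \<Rightarrow> nat" where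
  "lcs_lower V E k = Min {lcs V E k c | c. proper_colouring V E k c}"

end

theory Submission
  imports Defs
begin

lemma exists_proper:
  assumes sg: "simple_graph V E" and kc: "k \<ge> chromatic_number V E"
  shows "\<exists>c. proper_colouring V E k c"
proof -
  have fin: "finite V" using sg by (simp add: simple_graph_def)
  obtain f where f: "bij_betw f V {0..<card V}" using ex_bij_betw_finite_nat[OF fin] by blast
  have "proper_colouring V E (card V) (\<lambda>x. f x + 1)"
    unfolding proper_colouring_def
  proof (intro conjI ballI allI impI)
    fix v assume "v \<in> V"
    then have "f v < card V" using f by (auto dest: bij_betwE)
    then show "f v + 1 \<in> {1..card V}" by simp
  next
    fix u v assume "E u v"
    then have "u \<in> V" "v \<in> V" "u \<noteq> v" using sg unfolding simple_graph_def by metis+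
    then show "f u + 1 \<noteq> f v + 1" using f by (auto simp: bij_betw_def inj_on_def)
  qed
  then have ex: "\<exists>k c. proper_colouring V E k c" by blast
  obtain c where c: "proper_colouring V E (chromatic_number V E) c"
    unfolding chromatic_number_def using LeastI_ex[OF ex] by blast
  then have "proper_colouring V E k c" using kc
    unfolding proper_colouring_def by auto
  then show ?thesis by blast
qed

lemma det_V: "determining_set V E k c V"
  unfolding determining_set_def by auto

lemma crit_exists:
  assumes sg: "simple_graph V E"
  shows "\<exists>S. critical_set V E k c S"
proof -
  have fin: "finite V" using sg by (simp add: simple_graph_def)
  have ex: "\<exists>n S. determining_set V E k c S \<and> card S = n" using det_V by blast
  define n where "n = (LEAST n. \<exists>S. determining_set V E k c S \<and> card S = n)"
  obtain S where S: "determining_set V E k c S" "card S = n"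
    using LeastI_ex[OF ex] unfolding n_def by blast
  have "critical_set V E k c S"
    unfolding critical_set_def
  proof (intro conjI allI impI)
    show "determining_set V E k c S" by fact
  next
    fix T assume T: "T \<subset> S"
    have "finite S" using S(1) fin unfolding determining_set_def by (meson finite_subset)
    then have "card T < n" using T S(2) psubset_card_mono by blast
    then show "\<not> determining_set V E k c T"
      using not_less_Least[of "card T" "\<lambda>n. \<exists>S. determining_set V E k c S \<and> card S = n"]
      unfolding n_def by blast
  qed
  then show ?thesis by blast
qed

lemma crit_card:
  assumes sg: "simple_graph V E" and "critical_set V E k c S"
  shows "card S \<le> card V"
  using assms unfolding simple_graph_def critical_set_def determining_set_def
  by (meson card_mono)

lemma CS_finite:
  assumes sg: "simple_graph V E"
  shows "finite {card S | S. critical_set V E k c S}"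
    "{card S | S. critical_set V E k c S} \<noteq> {}"
proof -
  have "{card S | S. critical_set V E k c S} \<subseteq> {..card V}"
    using crit_card[OF sg] by auto
  then show "finite {card S | S. critical_set V E k c S}" by (meson finite_atMost finite_subset)
  show "{card S | S. critical_set V E k c S} \<noteq> {}" using crit_exists[OF sg] by blast
qed

lemma scs_le_lcs:
  assumes sg: "simple_graph V E"
  shows "scs V E k c \<le> lcs V E k c" "lcs V E k c \<le> card V"
proof -
  show "scs V E k c \<le> lcs V E k c"
    unfolding scs_def lcs_def using CS_finite[OF sg]
    by (meson Max_in Min_le)
  show "lcs V E k c \<le> card V"
    unfolding lcs_def using CS_finite[OF sg, of k c] crit_card[OF sg]
    by (smt (verit, ccfv_SIG) Max_in mem_Collect_eq)
qed

lemma det_all: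
  assumes sg: "simple_graph V E" and kd: "k > max_degree V E + 1"
    and c: "proper_colouring V E k c" and S: "determining_set V E k c S"
  shows "S = V"
proof (rule ccontr)
  assume "S \<noteq> V"
  with S obtain v where v: "v \<in> V" "v \<notin> S" unfolding determining_set_def by blast
  have fin: "finite V" using sg by (simp add: simple_graph_def)
  let ?N = "{u\<in>V. E v u}"
  have "degree V E v \<le> max_degree V E"
    unfolding max_degree_def using fin v by simp
  then have "card ?N \<le> max_degree V E" unfolding degree_def by simp
  moreover have "card (c ` ?N) \<le> card ?N" using fin by (simp add: card_image_le)
  ultimately have "card (insert (c v) (c ` ?N)) \<le> max_degree V E + 1"
  proof -
    have "card (insert (c v) (c ` ?N)) \<le> card (c ` ?N) + 1"
      using fin by (simp add: card_insert_if)
    then show ?thesis using \<open>card ?N \<le> max_degree V E\<close> \<open>card (c ` ?N) \<le> card ?N\<close> by linarith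
  qed
  then have "card (insert (c v) (c ` ?N)) < card {1..k}" using kd by simp
  moreover have "finite (insert (c v) (c ` ?N))" using fin by simp
  ultimately have "\<not> {1..k} \<subseteq> insert (c v) (c ` ?N)"
    using card_mono leD by blast
  then obtain a where a: "a \<in> {1..k}" "a \<noteq> c v" "a \<notin> c ` ?N" by blast
  have "proper_colouring V E k (c(v := a))"
    unfolding proper_colouring_def
  proof (intro conjI ballI allI impI)
    fix x assume "x \<in> V" then show "(c(v := a)) x \<in> {1..k}" using a c
      unfolding proper_colouring_def by auto
  next
    fix x y assume e: "E x y"
    have "x \<in> V" "y \<in> V" "x \<noteq> y" "E y x" using sg e unfolding simple_graph_def by metis+
    have cxy: "c x \<noteq> c y" using c e unfolding proper_colouring_def by blast
    show "(c(v := a)) x \<noteq> (c(v := a)) y"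
    proof (cases "x = v")
      case True
      then have "y \<in> ?N" using e \<open>y \<in> V\<close> by simp
      then have "c y \<noteq> a" using a(3) by blast
      then show ?thesis using True \<open>x \<noteq> y\<close> by simp
    next
      case False
      show ?thesis
      proof (cases "y = v")
        case True
        then have "x \<in> ?N" using \<open>E y x\<close> \<open>x \<in> V\<close> by simp
        then have "c x \<noteq> a" using a(3) by blast
        then show ?thesis using True False by simp
      next
        case False
        then show ?thesis using \<open>x \<noteq> v\<close> cxy by simp
      qed
    qed
  qed
  moreover have "(c(v := a)) v \<noteq> c v" using a by simp
  moreover have "\<forall>s\<in>S. (c(v := a)) s = c s" using v by auto
  ultimately show False using S v unfolding determining_set_def by blast
qed

lemma forced_det:
  assumes c: "proper_colouring V E k c" and u: "u \<in> V"
    and full: "{1..k} - {c u} \<subseteq> c ` {x\<in>V. E u x}"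
  shows "determining_set V E k c (V - {u})"
  unfolding determining_set_def
proof (intro conjI notI)
  show "V - {u} \<subseteq> V" by blast
next
  assume "\<exists>c'. proper_colouring V E k c' \<and> (\<exists>v\<in>V. c' v \<noteq> c v) \<and> (\<forall>s\<in>V - {u}. c' s = c s)"
  then obtain c' where c': "proper_colouring V E k c'" "\<exists>v\<in>V. c' v \<noteq> c v"
    "\<forall>s\<in>V - {u}. c' s = c s" by blast
  then have ne: "c' u \<noteq> c u" by auto
  have "c' u \<in> {1..k}" using c' u unfolding proper_colouring_def by auto
  with ne full obtain x where x: "x \<in> V" "E u x" "c x = c' u" by auto
  have "x \<noteq> u" using x c unfolding proper_colouring_def by metis
  then have "c' x = c x" using c' x by auto
  then show False using x c' unfolding proper_colouring_def by metis
qed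

lemma lcs_small:
  assumes sg: "simple_graph V E" and c: "proper_colouring V E k c" and u: "u \<in> V"
    and full: "{1..k} - {c u} \<subseteq> c ` {x\<in>V. E u x}"
  shows "lcs V E k c < card V"
proof -
  have fin: "finite V" using sg by (simp add: simple_graph_def)
  have d: "determining_set V E k c (V - {u})" using forced_det[OF c u full] .
  have "\<forall>n\<in>{card S | S. critical_set V E k c S}. n < card V"
  proof
    fix n assume "n \<in> {card S | S. critical_set V E k c S}"
    then obtain S where S: "critical_set V E k c S" "n = card S" by blast
    then have sub: "S \<subseteq> V" unfolding critical_set_def determining_set_def by blast
    have "S \<noteq> V" using S(1) d u unfolding critical_set_def by blast
    then show "n < card V" using sub fin S(2) by (simp add: psubset_card_mono)
  qed
  then show ?thesis unfolding lcs_def using CS_finite[OF sg, of k c] Max_in by blast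
qed

lemma key:
  assumes sg: "simple_graph V E" and v: "v \<in> V" and dv: "k \<le> degree V E v + 1"
    and ex: "\<exists>c. proper_colouring V E k c"
  shows "\<exists>c u. proper_colouring V E k c \<and> u \<in> V \<and> {1..k} - {c u} \<subseteq> c ` {x\<in>V. E u x}"
proof (rule ccontr)
  assume nt: "\<not> ?thesis"
  have fin: "finite V" using sg by (simp add: simple_graph_def)
  let ?N = "{u\<in>V. E v u}"
  have finN: "finite ?N" using fin by simp
  let ?M = "{card (c ` ?N) | c. proper_colouring V E k c}"
  have "?M \<subseteq> {..card ?N}" using card_image_le[OF finN] by auto
  then have finM: "finite ?M" by (meson finite_atMost finite_subset)
  have neM: "?M \<noteq> {}" using ex by blast
  have "Max ?M \<in> ?M" by (rule Max_in[OF finM neM])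
  then obtain c where c: "proper_colouring V E k c" "card (c ` ?N) = Max ?M"
    by (smt (verit) mem_Collect_eq)
  have maxc: "card (c' ` ?N) \<le> card (c ` ?N)" if pc: "proper_colouring V E k c'" for c'
  proof -
    have "card (c' ` ?N) \<in> ?M" using pc by blast
    then show ?thesis using c(2) Max_ge[OF finM] by simp
  qed
  have cv: "c v \<in> {1..k}" using c v unfolding proper_colouring_def by auto
  have nt': "\<And>u. u \<in> V \<Longrightarrow> \<not> ({1..k} - {c u} \<subseteq> c ` {x\<in>V. E u x})"
  proof
    fix u assume u: "u \<in> V" and h: "{1..k} - {c u} \<subseteq> c ` {x\<in>V. E u x}"
    have "\<exists>c u. proper_colouring V E k c \<and> u \<in> V \<and> {1..k} - {c u} \<subseteq> c ` {x\<in>V. E u x}"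
      using c(1) u h by (intro exI[of _ c] exI[of _ u] conjI)
    then show False using nt by contradiction
  qed
  obtain a where a: "a \<in> {1..k}" "a \<noteq> c v" "a \<notin> c ` ?N"
    using nt'[OF v] by blast
  have nx: "\<forall>x\<in>V. c x = a \<longrightarrow> (\<exists>y. y \<in> {1..k} - {a} \<and> y \<notin> c ` {z\<in>V. E x z})"
  proof (intro ballI impI)
    fix x assume "x \<in> V" "c x = a"
    then have "\<not> ({1..k} - {a} \<subseteq> c ` {z\<in>V. E x z})" using nt'[of x] by simp
    then show "\<exists>y. y \<in> {1..k} - {a} \<and> y \<notin> c ` {z\<in>V. E x z}" by (meson subsetI)
  qed
  define g where "g x = (SOME y. y \<in> {1..k} - {a} \<and> y \<notin> c ` {z\<in>V. E x z})" for x
  have g: "\<And>x. x \<in> V \<Longrightarrow> c x = a \<Longrightarrow> g x \<in> {1..k} - {a} \<and> g x \<notin> c ` {z\<in>V. E x z}"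
  proof -
    fix x assume xV: "x \<in> V" and cx: "c x = a"
    have "\<exists>y. y \<in> {1..k} - {a} \<and> y \<notin> c ` {z\<in>V. E x z}" using nx xV cx by blast
    then show "g x \<in> {1..k} - {a} \<and> g x \<notin> c ` {z\<in>V. E x z}"
      unfolding g_def by (rule someI_ex)
  qed
  define c1 where "c1 x = (if x \<in> V \<and> c x = a then g x else c x)" for x
  have c1V: "\<And>x. x \<in> V \<Longrightarrow> c1 x \<in> {1..k} \<and> c1 x \<noteq> a"
    using g c(1) unfolding c1_def proper_colouring_def by auto
  have c1E: "\<And>x y. E x y \<Longrightarrow> c1 x \<noteq> c1 y"
  proof -
    fix x y assume e: "E x y"
    have xy: "x \<in> V" "y \<in> V" "E y x" using sg e unfolding simple_graph_def by metis+
    have cxy: "c x \<noteq> c y" using c(1) e unfolding proper_colouring_def by blast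
    show "c1 x \<noteq> c1 y"
    proof (cases "c x = a")
      case True
      then have "c y \<noteq> a" using cxy by simp
      have "y \<in> {z\<in>V. E x z}" using xy e by simp
      then have "g x \<noteq> c y" using g[OF xy(1) True] by (metis image_eqI)
      then show ?thesis using xy True \<open>c y \<noteq> a\<close> unfolding c1_def by simp
    next
      case False
      show ?thesis
      proof (cases "c y = a")
        case True
        have "x \<in> {z\<in>V. E y z}" using xy by simp
        then have "g y \<noteq> c x" using g[OF xy(2) True] by (metis image_eqI)
        then show ?thesis using xy True False unfolding c1_def by simp
      next
        case F2: False
        then show ?thesis using False cxy unfolding c1_def by auto
      qed
    qed
  qed
  have k2: "card ({1..k} - {c v, a}) = k - 2" using a cv by (simp add: card_Diff_subset)
  have "c ` ?N \<subseteq> {1..k} - {c v, a}"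
  proof
    fix z assume "z \<in> c ` ?N"
    then obtain x where x: "x \<in> V" "E v x" "z = c x" by blast
    have "c v \<noteq> c x" using c(1) x(2) unfolding proper_colouring_def by blast
    moreover have "c x \<noteq> a" using a(3) x by blast
    moreover have "c x \<in> {1..k}" using c(1) x(1) unfolding proper_colouring_def by blast
    ultimately show "z \<in> {1..k} - {c v, a}" using x(3) by auto
  qed
  then have "card (c ` ?N) \<le> k - 2" using k2 card_mono[of "{1..k} - {c v, a}" "c ` ?N"] by simp
  moreover have "card ?N \<ge> k - 1" using dv unfolding degree_def by simp
  moreover have "k \<ge> 2" using a cv by auto
  ultimately have "card (c ` ?N) < card ?N" by linarith
  then have "\<not> inj_on c ?N" using card_image by (metis less_irrefl)
  then obtain w w' where ww: "w \<in> ?N" "w' \<in> ?N" "w \<noteq> w'" "c w = c w'"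
    unfolding inj_on_def by blast
  define c2 where "c2 = c1(w := a)"
  have p2: "proper_colouring V E k c2"
    unfolding proper_colouring_def
  proof (intro conjI ballI allI impI)
    fix x assume "x \<in> V" then show "c2 x \<in> {1..k}" using c1V a unfolding c2_def by auto
  next
    fix x y assume e: "E x y"
    have xy: "x \<in> V" "y \<in> V" "x \<noteq> y" using sg e unfolding simple_graph_def by metis+
    show "c2 x \<noteq> c2 y" using c1E[OF e] c1V[OF xy(1)] c1V[OF xy(2)] xy(3)
      unfolding c2_def by auto
  qed
  have "insert a (c ` ?N) \<subseteq> c2 ` ?N"
  proof
    fix z assume "z \<in> insert a (c ` ?N)"
    then consider "z = a" | x where "x \<in> ?N" "z = c x" by blast
    then show "z \<in> c2 ` ?N"
    proof cases
      case 1 then show ?thesis using ww unfolding c2_def by auto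
    next
      case 2
      have cx: "c x \<noteq> a" using 2 a by auto
      show ?thesis
      proof (cases "x = w")
        case True
        have "c2 w' = c w'" using ww cx True unfolding c2_def c1_def by auto
        then show ?thesis using 2 True ww by (metis image_eqI)
      next
        case False
        have "c2 x = c x" using 2 cx False unfolding c2_def c1_def by auto
        then show ?thesis using 2 by (metis image_eqI)
      qed
    qed
  qed
  then have "card (insert a (c ` ?N)) \<le> card (c2 ` ?N)" using finN by (simp add: card_mono)
  moreover have "card (insert a (c ` ?N)) = card (c ` ?N) + 1" using a finN by simp
  ultimately show False using maxc[OF p2] by linarith
qed

theorem theorem4:
  fixes V :: "'a set" and E :: "'a \<Rightarrow> 'a \<Rightarrow> bool" and k :: nat
  assumes "simple_graph V E"
    and "connected_graph V E"
    and "k \<ge> chromatic_number V E"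
  shows "(sn V E k = card V \<longleftrightarrow> k > max_degree V E + 1)
       \<and> (lcs_lower V E k = card V \<longleftrightarrow> k > max_degree V E + 1)"
proof -
  note sg = assms(1)
  have fin: "finite V" using sg by (simp add: simple_graph_def)
  have neV: "V \<noteq> {}" using assms(2) unfolding connected_graph_def by blast
  obtain c0 where c0: "proper_colouring V E k c0" using exists_proper[OF sg assms(3)] by blast
  have finA: "finite {scs V E k c | c. proper_colouring V E k c}"
    "finite {lcs V E k c | c. proper_colouring V E k c}"
  proof -
    have "{scs V E k c | c. proper_colouring V E k c} \<subseteq> {..card V}"
      using scs_le_lcs[OF sg] by (auto intro: order_trans[OF scs_le_lcs(1)[OF sg] scs_le_lcs(2)[OF sg]])
    then show "finite {scs V E k c | c. proper_colouring V E k c}"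
      by (meson finite_atMost finite_subset)
    have "{lcs V E k c | c. proper_colouring V E k c} \<subseteq> {..card V}"
      using scs_le_lcs[OF sg] by auto
    then show "finite {lcs V E k c | c. proper_colouring V E k c}"
      by (meson finite_atMost finite_subset)
  qed
  show ?thesis
  proof (cases "k > max_degree V E + 1")
    case True
    have crit: "\<And>c S. proper_colouring V E k c \<Longrightarrow> critical_set V E k c S \<longleftrightarrow> S = V"
    proof -
      fix c S assume pc: "proper_colouring V E k c"
      show "critical_set V E k c S \<longleftrightarrow> S = V"
        unfolding critical_set_def
        using det_all[OF sg True pc] det_V[of V E k c] by blast
    qed
    have cs: "\<And>c. proper_colouring V E k c \<Longrightarrow> {card S | S. critical_set V E k c S} = {card V}"
      using crit by auto
    have "\<And>c. proper_colouring V E k c \<Longrightarrow> scs V E k c = card V \<and> lcs V E k c = card V"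
      unfolding scs_def lcs_def using cs by simp
    then have eqs: "\<And>c. proper_colouring V E k c \<Longrightarrow> scs V E k c = card V \<and> lcs V E k c = card V" .
    have "{scs V E k c | c. proper_colouring V E k c} = {card V}"
      using c0 eqs by (auto intro!: exI[of _ c0])
    moreover have "{lcs V E k c | c. proper_colouring V E k c} = {card V}"
      using c0 eqs by (auto intro!: exI[of _ c0])
    ultimately have "{scs V E k c | c. proper_colouring V E k c} = {card V}"
      "{lcs V E k c | c. proper_colouring V E k c} = {card V}" by blast+
    then show ?thesis using True unfolding sn_def lcs_lower_def by simp
  next
    case False
    have "max_degree V E \<in> degree V E ` V" unfolding max_degree_def
      using fin neV by simp
    then obtain v where v: "v \<in> V" "degree V E v = max_degree V E" by auto
    obtain c u where cu: "proper_colouring V E k c" "u \<in> V"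
      "{1..k} - {c u} \<subseteq> c ` {x\<in>V. E u x}"
      using key[OF sg v(1) _ exists_proper[OF sg assms(3)]] False v(2) by fastforce
    have l: "lcs V E k c < card V" using lcs_small[OF sg cu] .
    have s: "scs V E k c < card V" using l scs_le_lcs[OF sg, of k c] by linarith
    have "sn V E k \<le> scs V E k c" unfolding sn_def using finA(1) cu(1) by (intro Min_le) auto
    moreover have "lcs_lower V E k \<le> lcs V E k c" unfolding lcs_lower_def
      using finA(2) cu(1) by (intro Min_le) auto
    ultimately show ?thesis using False l s by linarith
  qed
qed

end
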